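(* Let $T$ be a rooted binary phylogenetic tree with root of out-degree 2 and at least 3 leaves, under the $N_2$ model, let $y,z$ be a cherry with parent $w$, and let $T''$ and $T'_{0.5}$ be as defined in the context. Then $RA_\varphi(T'')\ge RA_\varphi(T'_{0.5})$.
   Context: A rooted binary phylogenetic tree is a finite tree with a distinguished root vertex $\rho$, all edges directed away from $\rho$, in which $\rho$ has out-degree 2 or 1, and every other vertex has in-degree 1 and out-degree 0 or 2; out-degree-0 vertices are leaves. Under the Neyman 2-state model $N_2$, each edge $e$ carries a substitution probability $p_e\in[0,\frac12]$; given the root state, states propagate independently along edges, each edge changing state with probability $p_e$. The coin-toss method $\varphi$: leaves get their observed states; proceeding towards the root, a vertex whose two children have equal states gets that state, otherwise one of the two chosen by an independent fair coin toss; a vertex with a single child gets its child's state; $RA_\varphi$ is the probability that the state assigned to the root equals the true root state. Vertices of in- and out-degree 1 may be suppressed (merging consecutive edges with substitution probabilities $a,b$ into one with probability $a+b-2ab$). $T'_{0.5}$ is obtained from $T$ by deleting $y,z$ and their incident edges, attaching a new leaf $w^\star$ to $w$ via an edge with substitution probability $\frac12$, and suppressing $w$. $T''$ is obtained from $T$ by deleting $y$, $z$, $w$ and all edges incident to them (including the edge into $w$), and suppressing the resulting vertex of in- and out-degree 1. *)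

theory Defs
  imports "HOL-Probability.Probability"
begin

text \<open>A (sub)tree below a non-root vertex of a rooted binary phylogenetic tree:
  either a leaf, or a vertex of out-degree 2 whose two outgoing edges carry
  substitution probabilities and lead to subtrees.\<close>
datatype ptree = Leaf | Node "real \<times> ptree" "real \<times> ptree"

text \<open>Rooted trees: root of out-degree 1 (one edge to a subtree) or of out-degree 2
  (then the whole tree is a ptree of the form Node).\<close>
datatype rtree = R1 real ptree | R2 ptree

fun leaves :: "ptree \<Rightarrow> nat" where
  "leaves Leaf = 1"
| "leaves (Node (_, l) (_, r)) = leaves l + leaves r"

fun valid :: "ptree \<Rightarrow> bool" where
  "valid Leaf = True"
| "valid (Node (p, l) (q, r)) =
     (0 \<le> p \<and> p \<le> 1/2 \<and> 0 \<le> q \<and> q \<le> 1/2 \<and> valid l \<and> valid r)"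

text \<open>Merging two consecutive edges with substitution probabilities a, b.\<close>
definition merge :: "real \<Rightarrow> real \<Rightarrow> real" where
  "merge a b = a + b - 2 * a * b"

definition edge :: "real \<Rightarrow> bool \<Rightarrow> bool pmf" where
  "edge p x = map_pmf (\<lambda>c. if c then \<not> x else x) (bernoulli_pmf p)"

definition coin :: "bool \<Rightarrow> bool \<Rightarrow> bool pmf" where
  "coin s1 s2 = (if s1 = s2 then return_pmf s1
                 else map_pmf (\<lambda>c. if c then s1 else s2) (bernoulli_pmf (1/2)))"

text \<open>phi t x: distribution of the state assigned by the coin-toss method to the
  top vertex of t, given that its true state is x (states evolve under N2 and
  coin tosses are independent).\<close>
fun phi :: "ptree \<Rightarrow> bool \<Rightarrow> bool pmf" where
  "phi Leaf x = return_pmf x"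
| "phi (Node (p1, t1) (p2, t2)) x =
     do { x1 \<leftarrow> edge p1 x; s1 \<leftarrow> phi t1 x1;
          x2 \<leftarrow> edge p2 x; s2 \<leftarrow> phi t2 x2;
          coin s1 s2 }"

fun phi_rt :: "rtree \<Rightarrow> bool \<Rightarrow> bool pmf" where
  "phi_rt (R2 t) x = phi t x"
| "phi_rt (R1 p t) x = do { x1 \<leftarrow> edge p x; phi t x1 }"

text \<open>Root accuracy: the root state is drawn uniformly (by the symmetry of N2 the
  value does not depend on the root distribution).\<close>
definition RA :: "rtree \<Rightarrow> real" where
  "RA T = pmf (do { x \<leftarrow> pmf_of_set (UNIV :: bool set); s \<leftarrow> phi_rt T x;
                    return_pmf (s = x) }) True"

text \<open>One-hole contexts: a position of a vertex in a ptree.  CL e c r is a vertex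
  whose left edge (probability e) leads to the hole-containing part c, and whose
  right child edge/subtree is r; CR symmetrically.\<close>
datatype ctx = Hole | CL real ctx "real \<times> ptree" | CR "real \<times> ptree" real ctx

fun plug :: "ctx \<Rightarrow> ptree \<Rightarrow> ptree" where
  "plug Hole t = t"
| "plug (CL e c r) t = Node (e, plug c t) r"
| "plug (CR l e c) t = Node l (e, plug c t)"

text \<open>Plug t into the hole, where the edge into the hole vertex is merged
  (suppression) with an extra edge of probability q.\<close>
fun plug_merge :: "ctx \<Rightarrow> real \<Rightarrow> ptree \<Rightarrow> ptree" where
  "plug_merge Hole q t = t"
| "plug_merge (CL e Hole r) q t = Node (merge e q, t) r"
| "plug_merge (CR l e Hole) q t = Node l (merge e q, t)"
| "plug_merge (CL e c r) q t = Node (e, plug_merge c q t) r"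
| "plug_merge (CR l e c) q t = Node l (e, plug_merge c q t)"

text \<open>Delete the hole vertex together with the edge into it; its parent u then
  has out-degree 1 and is suppressed (edge into u, probability g, merged with the
  remaining edge f), unless u is the root.  prune_sub g c gives the new edge
  probability and subtree replacing the edge g into the vertex described by c.\<close>
fun prune_sub :: "real \<Rightarrow> ctx \<Rightarrow> real \<times> ptree" where
  "prune_sub g Hole = (g, Leaf)"
| "prune_sub g (CL e Hole (f, s)) = (merge g f, s)"
| "prune_sub g (CR (f, s) e Hole) = (merge g f, s)"
| "prune_sub g (CL e c r) = (g, Node (prune_sub e c) r)"
| "prune_sub g (CR l e c) = (g, Node l (prune_sub e c))"

fun prune :: "ctx \<Rightarrow> rtree" where
  "prune Hole = R2 Leaf"
| "prune (CL e Hole (f, s)) = R1 f s"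
| "prune (CR (f, s) e Hole) = R1 f s"
| "prune (CL e c r) = R2 (Node (prune_sub e c) r)"
| "prune (CR l e c) = R2 (Node l (prune_sub e c))"

text \<open>For T = plug C (Node (a, Leaf) (b, Leaf)) (cherry y, z with parent w at
  the hole of C):\<close>
definition T_half :: "ctx \<Rightarrow> rtree" where
  "T_half C = R2 (plug_merge C (1/2) Leaf)"

definition T_dd :: "ctx \<Rightarrow> rtree" where
  "T_dd C = prune C"

end

theory Submission
  imports Defs
begin

definition cl :: "real \<Rightarrow> real" where "cl p = min 1 (max 0 p)"

lemma bern_T: "pmf (bernoulli_pmf p) True = cl p"
  by (simp add: bernoulli_pmf.rep_eq cl_def)
lemma bern_F: "pmf (bernoulli_pmf p) False = 1 - cl p"
  by (simp add: bernoulli_pmf.rep_eq cl_def)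

lemma pmf_bind_bool: "pmf (bind_pmf M f) y = pmf M True * pmf (f True) y + pmf M False * pmf (f False) y"
  unfolding pmf_bind
  by (subst integral_measure_pmf_real[of UNIV]) (auto simp: UNIV_bool)

lemma bool_sets: "{x::bool. x} = {True}" "{x::bool. \<not> x} = {False}" by auto

lemma pmf_edge: "pmf (edge p x) y = (if y = x then 1 - cl p else cl p)"
  unfolding edge_def
  by (cases x; cases y) (auto simp: pmf_map vimage_def bern_T bern_F bool_sets measure_pmf_single)

lemma pmf_coin: "pmf (coin s1 s2) y = (if s1 = s2 then (if y = s1 then 1 else 0) else 1/2)"
  unfolding coin_def
  by (cases s1; cases s2; cases y) (auto simp: pmf_map vimage_def bool_sets measure_pmf_single)

definition qf :: "real \<Rightarrow> real \<Rightarrow> real" where "qf p r = (1 - cl p) * r + cl p * (1 - r)"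

fun acc :: "ptree \<Rightarrow> real" where
  "acc Leaf = 1"
| "acc (Node (p1, t1) (p2, t2)) = (qf p1 (acc t1) + qf p2 (acc t2)) / 2"

fun acc_rt :: "rtree \<Rightarrow> real" where
  "acc_rt (R2 t) = acc t"
| "acc_rt (R1 p t) = qf p (acc t)"

lemma pmf_phi: "pmf (phi t x) y = (if y = x then acc t else 1 - acc t)"
proof (induction t arbitrary: x y rule: acc.induct)
  case 1
  then show ?case by auto
next
  case (2 p1 t1 p2 t2)
  show ?case
    by (cases x; cases y) (simp_all add: pmf_bind_bool pmf_edge pmf_coin 2 qf_def algebra_simps divide_simps)
qed

lemma RA_acc: "RA T = acc_rt T"
proof -
  have "pmf (phi_rt T x) y = (if y = x then acc_rt T else 1 - acc_rt T)" for x y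
    by (cases T) (auto simp: pmf_phi pmf_bind_bool pmf_edge qf_def algebra_simps)
  then show ?thesis unfolding RA_def
    by (simp add: pmf_bind_bool)
qed


fun cvalid :: "ctx \<Rightarrow> bool" where
  "cvalid Hole = True"
| "cvalid (CL e c (f, s)) = (0 \<le> e \<and> e \<le> 1/2 \<and> 0 \<le> f \<and> f \<le> 1/2 \<and> valid s \<and> cvalid c)"
| "cvalid (CR (f, s) e c) = (0 \<le> e \<and> e \<le> 1/2 \<and> 0 \<le> f \<and> f \<le> 1/2 \<and> valid s \<and> cvalid c)"

lemma valid_plug: "valid (plug c t) \<Longrightarrow> cvalid c"
  by (induction c) auto

lemma cl_id: "0 \<le> p \<Longrightarrow> p \<le> 1 \<Longrightarrow> cl p = p"
  by (simp add: cl_def)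

lemma qf_mono: "p \<le> 1/2 \<Longrightarrow> r \<le> r' \<Longrightarrow> qf p r \<le> qf p r'"
proof -
  assume a: "p \<le> 1/2" "r \<le> r'"
  have "cl p \<le> 1/2" using a by (simp add: cl_def)
  then have "0 \<le> (1 - 2 * cl p) * (r' - r)" using a by simp
  then show ?thesis by (simp add: qf_def algebra_simps)
qed

lemma qf_half: "p \<le> 1/2 \<Longrightarrow> 1/2 \<le> r \<Longrightarrow> 1/2 \<le> qf p r"
proof -
  assume a: "p \<le> 1/2" "1/2 \<le> r"
  have "qf p (1/2) = 1/2" unfolding qf_def by (simp add: field_simps)
  then show ?thesis using qf_mono[OF a] by linarith
qed

lemma acc_half: "valid t \<Longrightarrow> 1/2 \<le> acc t"
proof (induction t rule: acc.induct)
  case (2 p1 t1 p2 t2)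
  then have "1/2 \<le> qf p1 (acc t1)" "1/2 \<le> qf p2 (acc t2)"
    using qf_half[of p1 "acc t1"] qf_half[of p2 "acc t2"] by simp_all
  then show ?case by simp
qed simp

lemma merge_half: "merge e (1/2) = 1/2" by (simp add: merge_def)

lemma qf_merge: "0 \<le> g \<Longrightarrow> g \<le> 1/2 \<Longrightarrow> 0 \<le> f \<Longrightarrow> f \<le> 1/2 \<Longrightarrow> qf (merge g f) r = qf g (qf f r)"
proof -
  assume a: "0 \<le> g" "g \<le> 1/2" "0 \<le> f" "f \<le> 1/2"
  have "0 \<le> f * (1 - 2*g)" "0 \<le> (1 - 2*g) * (1 - 2*f)" using a by simp_all
  then have "0 \<le> merge g f" "merge g f \<le> 1" using a unfolding merge_def by (simp_all add: algebra_simps)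
  then show ?thesis using a by (simp add: qf_def cl_id merge_def algebra_simps)
qed

lemma qf_1: "qf p 1 = 1 - cl p" by (simp add: qf_def)

lemma acc_node: "acc (Node x y) = (qf (fst x) (acc (snd x)) + qf (fst y) (acc (snd y))) / 2"
  by (cases x; cases y) simp

lemma key: "cvalid c \<Longrightarrow> 0 \<le> g \<Longrightarrow> g \<le> 1/2 \<Longrightarrow>
  qf g (acc (plug_merge c (1/2) Leaf)) \<le> qf (fst (prune_sub g c)) (acc (snd (prune_sub g c)))"
proof (induction g c rule: prune_sub.induct)
  case (2 g e f s)
  have Q: "1/2 \<le> qf f (acc s)" using 2 qf_half acc_half by simp
  have "qf g ((1 - cl (1/2) + qf f (acc s)) / 2) \<le> qf g (qf f (acc s))"
    by (rule qf_mono) (use 2 Q in \<open>auto simp: cl_def\<close>)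
  then show ?case using 2 by (simp add: merge_half qf_1 qf_merge)
next
  case (3 g f s e)
  have Q: "1/2 \<le> qf f (acc s)" using 3 qf_half acc_half by simp
  have "qf g ((qf f (acc s) + (1 - cl (1/2))) / 2) \<le> qf g (qf f (acc s))"
    by (rule qf_mono) (use 3 Q in \<open>auto simp: cl_def\<close>)
  then show ?case using 3 by (simp add: merge_half qf_1 qf_merge)
qed (auto simp: acc_node intro!: qf_mono)


theorem mainTheorem8:
  fixes T :: ptree and C :: ctx and a b :: real
  assumes "T = plug C (Node (a, Leaf) (b, Leaf))"
    and "valid T"
    and "leaves T \<ge> 3"
  shows "RA (T_dd C) \<ge> RA (T_half C)"
proof -
  have cv: "cvalid C" using assms valid_plug by simp
  have ch: "cl (1/2) = 1/2" by (simp add: cl_def)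
  have "acc_rt (R2 (plug_merge C (1/2) Leaf)) \<le> acc_rt (prune C)"
  proof (cases C rule: prune.cases)
    case 1
    then show ?thesis using assms by simp
  next
    case (2 e f s)
    have Q: "1/2 \<le> qf f (acc s)" using cv 2 qf_half acc_half by simp
    then show ?thesis using 2 by (simp add: merge_half qf_1 ch)
  next
    case (3 f s e)
    have Q: "1/2 \<le> qf f (acc s)" using cv 3 qf_half acc_half by simp
    then show ?thesis using 3 by (simp add: merge_half qf_1 ch)
  qed (use cv key in \<open>fastforce simp: acc_node\<close>)+
  then show ?thesis unfolding RA_acc T_dd_def T_half_def .
qed

end
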